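(* Let $\hat B=(\hat\beta_{k,j})$ and $\tilde B_0=(\tilde\beta^0_{k,j})$ be real $p\times p$ matrices, let $\hat s$ and $\tilde s$ be their numbers of nonzero entries, and let $\tilde\lambda>0$, $0\le\eta_1<1$, $0<\eta_2^2<1-\eta_1$. Suppose $\|\hat B-\tilde B_0\|_F\le\tilde\lambda\sqrt{\tilde s}$ and $$\#\{(k,j):|\tilde\beta^0_{k,j}|\ge\tilde\lambda/\eta_2\}\ge(1-\eta_1)\tilde s.$$ Then $\hat s\ge(1-\eta_1-\eta_2^2)\tilde s$.
   Context: $\|\cdot\|_F$ denotes the Frobenius norm. *)

theory Defs
  imports "HOL-Analysis.Analysis"
begin

definition frob_norm :: "real^'n^'m \<Rightarrow> real" where
  "frob_norm A = sqrt (\<Sum>k\<in>UNIV. \<Sum>j\<in>UNIV. (A $ k $ j)\<^sup>2)"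

definition nnz :: "real^'n^'m \<Rightarrow> nat" where
  "nnz A = card {(k, j). A $ k $ j \<noteq> 0}"

end

theory Submission
  imports Defs
begin

theorem lemma7p2:
  fixes Bhat Bt0 :: "real^'p^'p" and lam eta1 eta2 :: real
  assumes "lam > 0" and "0 \<le> eta1" and "eta1 < 1"
    and "0 < eta2" and "eta2\<^sup>2 < 1 - eta1"
    and "frob_norm (Bhat - Bt0) \<le> lam * sqrt (real (nnz Bt0))"
    and "real (card {(k, j). \<bar>Bt0 $ k $ j\<bar> \<ge> lam / eta2}) \<ge> (1 - eta1) * real (nnz Bt0)"
  shows "real (nnz Bhat) \<ge> (1 - eta1 - eta2\<^sup>2) * real (nnz Bt0)"
proof -
  define S where "S = {(k, j). \<bar>Bt0 $ k $ j\<bar> \<ge> lam / eta2}"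
  define Z where "Z = {(k, j). Bhat $ k $ j = 0}"
  define T where "T = S \<inter> Z"
  define s where "s = real (nnz Bt0)"
  define f where "f = (\<lambda>(k,j). ((Bhat - Bt0) $ k $ j)\<^sup>2)"
  have s0: "s \<ge> 0" unfolding s_def by simp
  have F2: "(frob_norm (Bhat - Bt0))\<^sup>2 = sum f UNIV"
    unfolding frob_norm_def f_def
    by (simp add: sum_nonneg sum.cartesian_product UNIV_Times_UNIV[symmetric] del: UNIV_Times_UNIV) (auto intro: sum_nonneg)
  have fn: "\<And>x. f x \<ge> 0" unfolding f_def by auto
  have "sum f T \<le> sum f UNIV" by (rule sum_mono2) (auto simp: fn)
  moreover have "real (card T) * (lam/eta2)\<^sup>2 \<le> sum f T"
  proof -
    have "\<And>x. x \<in> T \<Longrightarrow> (lam/eta2)\<^sup>2 \<le> f x"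
    proof -
      fix x assume "x \<in> T"
      then obtain k j where x: "x = (k,j)" and a: "\<bar>Bt0 $ k $ j\<bar> \<ge> lam/eta2" and b: "Bhat $ k $ j = 0"
        unfolding T_def S_def Z_def by auto
      have "0 \<le> lam/eta2" using assms by simp
      hence "(lam/eta2)\<^sup>2 \<le> \<bar>Bt0 $ k $ j\<bar>\<^sup>2" using a by (metis power_mono power2_abs)
      thus "(lam/eta2)\<^sup>2 \<le> f x" using b by (simp add: x f_def)
    qed
    hence "sum (\<lambda>_. (lam/eta2)\<^sup>2) T \<le> sum f T" by (rule sum_mono)
    thus ?thesis by simp
  qed
  moreover have "(frob_norm (Bhat - Bt0))\<^sup>2 \<le> lam\<^sup>2 * s"
  proof -
    have "0 \<le> frob_norm (Bhat - Bt0)" unfolding frob_norm_def by (simp add: sum_nonneg)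
    hence "(frob_norm (Bhat - Bt0))\<^sup>2 \<le> (lam * sqrt s)\<^sup>2"
      using assms(6) s_def by (intro power_mono) auto
    thus ?thesis using s0 by (simp add: power_mult_distrib)
  qed
  ultimately have "real (card T) * (lam/eta2)\<^sup>2 \<le> lam\<^sup>2 * s" using F2 by linarith
  hence "real (card T) * lam\<^sup>2 \<le> eta2\<^sup>2 * s * lam\<^sup>2" using assms
    by (simp add: power_divide field_simps)
  hence cT: "real (card T) \<le> eta2\<^sup>2 * s" using assms by simp
  have "card S \<le> card (S - Z) + card T"
    unfolding T_def by (metis Diff_Diff_Int card_Diff_subset_Int card_Un_le finite Un_Diff_Int le_refl
        Diff_Int_distrib Int_commute) 
  moreover have "card (S - Z) \<le> nnz Bhat"
    unfolding nnz_def by (rule card_mono) (auto simp: Z_def)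
  ultimately have "real (card S) \<le> real (nnz Bhat) + real (card T)" by linarith
  thus ?thesis using cT assms(7) unfolding S_def s_def by (simp add: algebra_simps)
qed

end
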